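(* Let $\Sigma$ be a non-empty finite or countably infinite alphabet and let $\mu$ be a probability map over $\Sigma$ that is not induced by any Bernoulli distribution on $\Sigma$. Then there exists a finite word $w\in\Sigma^*$ such that for every $\mu$-distributed $\alpha\in\Sigma^\omega$, the Postnikova strategy $\mathcal S_w=\{vw: v\in\Sigma^*\}$ selects from $\alpha$ an infinite sequence $\mathcal S_w[\alpha]$ that is not $\mu$-distributed.
   Context: A probability map over $\Sigma$ is $\mu:\Sigma^+\to[0,1]$ with $\sum_{w\in\Sigma^n}\mu(w)=1$ for each $n\ge1$ (convention $\mu(\lambda)=1$). $\mu$ is induced by a Bernoulli distribution $p:\Sigma\to[0,1]$ with $\sum_a p(a)=1$ if $\mu(a_1\cdots a_n)=\prod_i p(a_i)$ for all words. $\#_w(v)$ is the number of (possibly overlapping) occurrences of $w$ as a contiguous block in $v$; $\alpha$ is $\mu$-distributed if $\lim_{N\to\infty}\#_w(\alpha|_{\le N})/N=\mu(w)$ for all $w\in\Sigma^+$, where $\alpha|_{\le N}$ is the length-$N$ prefix. For a strategy $S\subseteq\Sigma^*$, $S[\alpha]$ is the subsequence of those $\alpha_i$ with $\alpha_1\cdots\alpha_{i-1}\in S$. *)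

theory Defs
  imports "HOL-Analysis.Analysis" "HOL-Library.Countable"
begin

text \<open>Words over the alphabet 'a are lists; infinite sequences are functions nat => 'a
  (position 0 is the first letter). A probability map is given on all words, with the
  convention mu [] = 1.\<close>

definition prob_map :: "('a list \<Rightarrow> real) \<Rightarrow> bool" where
  "prob_map \<mu> \<longleftrightarrow> \<mu> [] = 1 \<and>
     (\<forall>w. w \<noteq> [] \<longrightarrow> 0 \<le> \<mu> w \<and> \<mu> w \<le> 1) \<and>
     (\<forall>n\<ge>1. (\<mu> has_sum 1) {w. length w = n})"

definition bernoulli_dist :: "('a \<Rightarrow> real) \<Rightarrow> bool" where
  "bernoulli_dist p \<longleftrightarrow> (\<forall>a. 0 \<le> p a \<and> p a \<le> 1) \<and> (p has_sum 1) UNIV"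

definition induced_by_bernoulli :: "('a list \<Rightarrow> real) \<Rightarrow> ('a \<Rightarrow> real) \<Rightarrow> bool" where
  "induced_by_bernoulli \<mu> p \<longleftrightarrow> bernoulli_dist p \<and>
     (\<forall>w. w \<noteq> [] \<longrightarrow> \<mu> w = (\<Prod>i<length w. p (w ! i)))"

definition occ_count :: "'a list \<Rightarrow> 'a list \<Rightarrow> nat" where
  "occ_count w v = card {i. i + length w \<le> length v \<and> take (length w) (drop i v) = w}"

definition prefix_seq :: "(nat \<Rightarrow> 'a) \<Rightarrow> nat \<Rightarrow> 'a list" where
  "prefix_seq \<alpha> N = map \<alpha> [0..<N]"

definition mu_distributed :: "('a list \<Rightarrow> real) \<Rightarrow> (nat \<Rightarrow> 'a) \<Rightarrow> bool" where
  "mu_distributed \<mu> \<alpha> \<longleftrightarrow>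
     (\<forall>w. w \<noteq> [] \<longrightarrow>
        (\<lambda>N. real (occ_count w (prefix_seq \<alpha> N)) / real N) \<longlonglongrightarrow> \<mu> w)"

definition selected_pos :: "'a list set \<Rightarrow> (nat \<Rightarrow> 'a) \<Rightarrow> nat set" where
  "selected_pos S \<alpha> = {i. prefix_seq \<alpha> i \<in> S}"

definition select_seq :: "'a list set \<Rightarrow> (nat \<Rightarrow> 'a) \<Rightarrow> nat \<Rightarrow> 'a" where
  "select_seq S \<alpha> = \<alpha> \<circ> enumerate (selected_pos S \<alpha>)"

definition postnikova :: "'a list \<Rightarrow> 'a list set" where
  "postnikova w = {v @ w | v. True}"

end

theory Submission imports Defs begin

lemma take_drop_prefix:
  "k + L \<le> N \<Longrightarrow> take L (drop k (prefix_seq \<alpha> N)) = map \<alpha> [k..<k+L]"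
  by (simp add: prefix_seq_def drop_map take_map)

lemma occ_eq:
  "occ_count w (prefix_seq \<alpha> N) = card {k. k + length w \<le> N \<and> map \<alpha> [k..<k+length w] = w}"
  unfolding occ_count_def
  by (rule arg_cong[where f=card]) (auto simp: take_drop_prefix, auto simp: prefix_seq_def take_drop_prefix[unfolded prefix_seq_def])

lemma sel_iff:
  "prefix_seq \<alpha> i \<in> postnikova w \<longleftrightarrow> length w \<le> i \<and> map \<alpha> [i - length w..<i] = w"
proof
  assume "prefix_seq \<alpha> i \<in> postnikova w"
  then obtain v where v: "map \<alpha> [0..<i] = v @ w" by (auto simp: postnikova_def prefix_seq_def)
  hence len: "length w \<le> i" by (metis le_add2 length_append length_map length_upt minus_nat.diff_0)
  have "drop (length v) (map \<alpha> [0..<i]) = w" using v by simp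
  moreover have "length v = i - length w" using v by (metis add_diff_cancel_right' diff_zero length_append length_map length_upt)
  ultimately show "length w \<le> i \<and> map \<alpha> [i - length w..<i] = w" using len by (simp add: drop_map)
next
  assume a: "length w \<le> i \<and> map \<alpha> [i - length w..<i] = w"
  have "[0..<i] = [0..<i - length w] @ [i - length w..<i]"
    using a by (metis le_add_diff_inverse2 upt_add_eq_append zero_le)
  hence "prefix_seq \<alpha> i = map \<alpha> [0..<i - length w] @ w" using a by (simp add: prefix_seq_def)
  thus "prefix_seq \<alpha> i \<in> postnikova w" by (auto simp: postnikova_def)
qed

lemma selpos_eq:
  "selected_pos (postnikova w) \<alpha> = {i. length w \<le> i \<and> map \<alpha> [i - length w..<i] = w}"
  by (simp add: selected_pos_def sel_iff)

lemma card_atMost: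
  fixes w :: "'a list" and \<alpha> :: "nat \<Rightarrow> 'a"
  defines "P \<equiv> selected_pos (postnikova w) \<alpha>"
  shows "card (P \<inter> {..N}) = occ_count w (prefix_seq \<alpha> N)"
proof -
  let ?L = "length w"
  have "P \<inter> {..N} = (\<lambda>k. k + ?L) ` {k. k + ?L \<le> N \<and> map \<alpha> [k..<k+?L] = w}"
  proof (intro set_eqI iffI)
    fix x assume "x \<in> P \<inter> {..N}"
    thus "x \<in> (\<lambda>k. k + ?L) ` {k. k + ?L \<le> N \<and> map \<alpha> [k..<k+?L] = w}"
      unfolding P_def selpos_eq by (intro rev_image_eqI[where x="x - ?L"]) auto
  qed (auto simp: P_def selpos_eq)
  moreover have "inj (\<lambda>k::nat. k + ?L)" by (simp add: inj_on_def)
  ultimately show ?thesis by (simp add: occ_eq card_image inj_on_subset)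
qed

lemma card_letter:
  fixes w :: "'a list" and \<alpha> :: "nat \<Rightarrow> 'a"
  defines "P \<equiv> selected_pos (postnikova w) \<alpha>"
  shows "card {i\<in>P. i < N \<and> \<alpha> i = a} = occ_count (w @ [a]) (prefix_seq \<alpha> N)"
proof -
  let ?L = "length w"
  have e: "map \<alpha> [k..<k + (?L + 1)] = w @ [a] \<longleftrightarrow> map \<alpha> [k..<k+?L] = w \<and> \<alpha> (k + ?L) = a" for k
  proof -
    have "map \<alpha> [k..<k + (?L + 1)] = map \<alpha> [k..<k+?L] @ [\<alpha> (k+?L)]" by simp
    thus ?thesis by (simp only: append1_eq_conv)
  qed
  have "{i\<in>P. i < N \<and> \<alpha> i = a} = (\<lambda>k. k + ?L) ` {k. k + (?L+1) \<le> N \<and> map \<alpha> [k..<k+(?L+1)] = w @ [a]}"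
  proof (intro set_eqI iffI)
    fix x assume "x \<in> {i\<in>P. i < N \<and> \<alpha> i = a}"
    thus "x \<in> (\<lambda>k. k + ?L) ` {k. k + (?L+1) \<le> N \<and> map \<alpha> [k..<k+(?L+1)] = w @ [a]}"
      unfolding P_def selpos_eq e by (intro rev_image_eqI[where x="x - ?L"]) auto
  qed (auto simp: P_def selpos_eq e)
  moreover have "inj (\<lambda>k::nat. k + ?L)" by (simp add: inj_on_def)
  ultimately show ?thesis by (simp add: occ_eq card_image inj_on_subset)
qed

lemma occ_mono: "occ_count (w @ [a]) v \<le> occ_count w v"
  unfolding occ_count_def
proof (rule card_mono)
  show "finite {i. i + length w \<le> length v \<and> take (length w) (drop i v) = w}"
    by (rule finite_subset[of _ "{..length v}"]) auto
  show "{i. i + length (w @ [a]) \<le> length v \<and> take (length (w @ [a])) (drop i v) = w @ [a]}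
        \<subseteq> {i. i + length w \<le> length v \<and> take (length w) (drop i v) = w}"
  proof clarify
    fix i assume "i + length (w @ [a]) \<le> length v" "take (length (w @ [a])) (drop i v) = w @ [a]"
    moreover have "take (length w) (take (length (w @ [a])) (drop i v)) = take (length w) (drop i v)"
      by simp
    ultimately show "i + length w \<le> length v \<and> take (length w) (drop i v) = w" by simp
  qed
qed

lemma mu_le:
  assumes "mu_distributed \<mu> \<alpha>" "w \<noteq> []"
  shows "\<mu> (w @ [a]) \<le> \<mu> w"
proof (rule LIMSEQ_le)
  show "(\<lambda>N. real (occ_count (w@[a]) (prefix_seq \<alpha> N)) / real N) \<longlonglongrightarrow> \<mu> (w @ [a])"
    using assms by (simp add: mu_distributed_def)
  show "(\<lambda>N. real (occ_count w (prefix_seq \<alpha> N)) / real N) \<longlonglongrightarrow> \<mu> w"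
    using assms by (simp add: mu_distributed_def)
  show "\<exists>N. \<forall>n\<ge>N. real (occ_count (w@[a]) (prefix_seq \<alpha> n)) / real n \<le> real (occ_count w (prefix_seq \<alpha> n)) / real n"
    by (intro exI allI impI divide_right_mono) (auto simp: occ_mono)
qed

lemma sel_infinite:
  assumes "mu_distributed \<mu> \<alpha>" "w \<noteq> []" "\<mu> w > 0"
  shows "infinite (selected_pos (postnikova w) \<alpha>)"
proof
  let ?P = "selected_pos (postnikova w) \<alpha>"
  assume fin: "finite ?P"
  have "\<mu> w \<le> 0"
  proof (rule LIMSEQ_le)
    show "(\<lambda>N. real (occ_count w (prefix_seq \<alpha> N)) / real N) \<longlonglongrightarrow> \<mu> w"
      using assms by (simp add: mu_distributed_def)
    show "(\<lambda>N. real (card ?P) / real N) \<longlonglongrightarrow> 0" by (rule lim_const_over_n)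
    show "\<exists>N. \<forall>n\<ge>N. real (occ_count w (prefix_seq \<alpha> n)) / real n \<le> real (card ?P) / real n"
    proof (intro exI allI impI divide_right_mono)
      fix n
      have "card (?P \<inter> {..n}) \<le> card ?P" using fin by (intro card_mono) auto
      thus "real (occ_count w (prefix_seq \<alpha> n)) \<le> real (card ?P)"
        by (simp add: card_atMost[symmetric])
    qed auto
  qed
  with assms show False by simp
qed

lemma mu_mult:
  assumes "mu_distributed \<mu> \<alpha>" "w \<noteq> []" "\<mu> w > 0"
    and "mu_distributed \<mu> (select_seq (postnikova w) \<alpha>)"
  shows "\<mu> (w @ [a]) = \<mu> w * \<mu> [a]"
proof -
  define P where "P = selected_pos (postnikova w) \<alpha>"
  define e where "e = enumerate P"
  have inf: "infinite P" using sel_infinite[OF assms(1-3)] by (simp add: P_def)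
  have sm: "strict_mono e" unfolding e_def using inf by (simp add: strict_mono_def)
  have ePi: "e n \<in> P" for n using inf by (simp add: e_def enumerate_in_set)
  have below: "{i\<in>P. i < e M} = e ` {..<M}" for M
  proof (intro set_eqI iffI)
    fix i assume "i \<in> {i\<in>P. i < e M}"
    then obtain n where "e n = i" "i < e M" using enumerate_Ex[OF inf] by (auto simp: e_def)
    thus "i \<in> e ` {..<M}" using sm by (auto simp: strict_mono_less)
  qed (auto simp: ePi sm strict_mono_less)
  have belowle: "P \<inter> {..e M} = e ` {..M}" for M
  proof (intro set_eqI iffI)
    fix i assume "i \<in> P \<inter> {..e M}"
    then obtain n where "e n = i" "i \<le> e M" using enumerate_Ex[OF inf] by (auto simp: e_def)
    thus "i \<in> e ` {..M}" using sm by (auto simp: strict_mono_less_eq)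
  qed (auto simp: ePi sm strict_mono_less_eq)
  have inj: "inj e" using sm strict_mono_imp_inj_on by blast
  have cM: "occ_count w (prefix_seq \<alpha> (e M)) = Suc M" for M
    using card_atMost[of w \<alpha> "e M"] belowle[of M] inj
    by (simp add: P_def card_image inj_on_subset)
  have cA: "occ_count [a] (prefix_seq (select_seq (postnikova w) \<alpha>) M)
      = occ_count (w @ [a]) (prefix_seq \<alpha> (e M))" for M
  proof -
    have "occ_count [a] (prefix_seq (select_seq (postnikova w) \<alpha>) M) = card {j. j < M \<and> \<alpha> (e j) = a}"
      by (simp add: occ_eq select_seq_def e_def P_def Suc_le_eq)
    also have "\<dots> = card (e ` {j. j < M \<and> \<alpha> (e j) = a})"
      using inj by (simp add: card_image inj_on_subset)
    also have "e ` {j. j < M \<and> \<alpha> (e j) = a} = {i\<in>P. i < e M \<and> \<alpha> i = a}"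
      using below[of M] by auto
    also have "card \<dots> = occ_count (w @ [a]) (prefix_seq \<alpha> (e M))"
      unfolding P_def by (rule card_letter)
    finally show ?thesis .
  qed
  have L1: "(\<lambda>M. real (Suc M) / real (e M)) \<longlonglongrightarrow> \<mu> w"
  proof -
    have "(\<lambda>N. real (occ_count w (prefix_seq \<alpha> N)) / real N) \<longlonglongrightarrow> \<mu> w"
      using assms by (simp add: mu_distributed_def)
    from LIMSEQ_subseq_LIMSEQ[OF this sm] show ?thesis by (simp add: o_def cM)
  qed
  have L0: "(\<lambda>M. 1 / real (e M)) \<longlonglongrightarrow> 0"
    using LIMSEQ_subseq_LIMSEQ[OF lim_const_over_n[of 1] sm] by (simp add: o_def)
  have L2: "(\<lambda>M. real M / real (e M)) \<longlonglongrightarrow> \<mu> w"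
  proof -
    have "(\<lambda>M. real (Suc M) / real (e M) - 1 / real (e M)) \<longlonglongrightarrow> \<mu> w - 0"
      by (intro tendsto_diff L1 L0)
    thus ?thesis by (simp add: diff_divide_distrib[symmetric])
  qed
  have L3: "(\<lambda>M. real (occ_count (w @ [a]) (prefix_seq \<alpha> (e M))) / real M) \<longlonglongrightarrow> \<mu> [a]"
    using assms(4) unfolding mu_distributed_def by (auto simp: cA[symmetric])
  have L4: "(\<lambda>M. real (occ_count (w @ [a]) (prefix_seq \<alpha> (e M))) / real (e M)) \<longlonglongrightarrow> \<mu> (w @ [a])"
  proof -
    have "(\<lambda>N. real (occ_count (w@[a]) (prefix_seq \<alpha> N)) / real N) \<longlonglongrightarrow> \<mu> (w@[a])"
      using assms by (simp add: mu_distributed_def)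
    from LIMSEQ_subseq_LIMSEQ[OF this sm] show ?thesis by (simp add: o_def)
  qed
  have L5: "(\<lambda>M. real (occ_count (w @ [a]) (prefix_seq \<alpha> (e M))) / real M * (real M / real (e M)))
      \<longlonglongrightarrow> \<mu> [a] * \<mu> w"
    by (intro tendsto_mult L3 L2)
  have "(\<lambda>M. real (occ_count (w @ [a]) (prefix_seq \<alpha> (e M))) / real M * (real M / real (e M)))
      = (\<lambda>M. real (occ_count (w @ [a]) (prefix_seq \<alpha> (e M))) / real (e M))"
  proof
    fix M
    show "real (occ_count (w @ [a]) (prefix_seq \<alpha> (e M))) / real M * (real M / real (e M))
      = real (occ_count (w @ [a]) (prefix_seq \<alpha> (e M))) / real (e M)"
    proof (cases "M = 0")
      case True
      have "occ_count (w @ [a]) (prefix_seq \<alpha> (e M)) = 0" using cA[of M] True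
        by (simp add: occ_eq)
      thus ?thesis by simp
    qed simp
  qed
  with L5 have "(\<lambda>M. real (occ_count (w @ [a]) (prefix_seq \<alpha> (e M))) / real (e M)) \<longlonglongrightarrow> \<mu> [a] * \<mu> w"
    by simp
  from LIMSEQ_unique[OF L4 this] show ?thesis by simp
qed

theorem lemma4p1:
  fixes \<mu> :: "('a::countable) list \<Rightarrow> real"
  assumes "prob_map \<mu>"
    and "\<not> (\<exists>p. induced_by_bernoulli \<mu> p)"
  shows "\<exists>w. \<forall>\<alpha>. mu_distributed \<mu> \<alpha> \<longrightarrow>
           infinite (selected_pos (postnikova w) \<alpha>) \<and>
           \<not> mu_distributed \<mu> (select_seq (postnikova w) \<alpha>)"
proof (rule ccontr)
  assume H: "\<not> ?thesis"
  have H': "\<exists>\<alpha>. mu_distributed \<mu> \<alpha> \<and> (finite (selected_pos (postnikova w) \<alpha>) \<or>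
           mu_distributed \<mu> (select_seq (postnikova w) \<alpha>))" for w
    using H by blast
  define p where "p a = \<mu> [a]" for a
  have pm: "\<mu> [] = 1" "\<And>w. w \<noteq> [] \<Longrightarrow> 0 \<le> \<mu> w \<and> \<mu> w \<le> 1"
    "\<And>n. n \<ge> 1 \<Longrightarrow> (\<mu> has_sum 1) {w. length w = n}"
    using assms(1) by (auto simp: prob_map_def)
  have step: "\<mu> (u @ [a]) = \<mu> u * p a" if "u \<noteq> []" for u a
  proof -
    obtain \<alpha> where al: "mu_distributed \<mu> \<alpha>" and
      alt: "finite (selected_pos (postnikova u) \<alpha>) \<or> mu_distributed \<mu> (select_seq (postnikova u) \<alpha>)"
      using H'[of u] by blast
    show ?thesis
    proof (cases "\<mu> u > 0")
      case True
      with alt sel_infinite[OF al that True] have "mu_distributed \<mu> (select_seq (postnikova u) \<alpha>)" by blast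
      from mu_mult[OF al that True this] show ?thesis by (simp add: p_def)
    next
      case False
      hence "\<mu> u = 0" using pm(2)[OF that] by simp
      moreover have "\<mu> (u @ [a]) \<le> \<mu> u" by (rule mu_le[OF al that])
      moreover have "0 \<le> \<mu> (u @ [a])" using pm(2)[of "u @ [a]"] by simp
      ultimately show ?thesis by simp
    qed
  qed
  have prod: "w \<noteq> [] \<longrightarrow> \<mu> w = (\<Prod>i<length w. p (w ! i))" for w
  proof (induction w rule: rev_induct)
    case (snoc a u)
    show ?case
    proof (cases "u = []")
      case True thus ?thesis by (simp add: p_def)
    next
      case False
      have pr: "(\<Prod>i<length (u @ [a]). p ((u @ [a]) ! i)) = (\<Prod>i<length u. p (u ! i)) * p a"
        by (simp add: nth_append)
      have "\<mu> (u @ [a]) = \<mu> u * p a" by (rule step[OF False])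
      also have "\<mu> u = (\<Prod>i<length u. p (u ! i))" using snoc False by simp
      finally show ?thesis using pr by (intro impI) (metis (no_types))
    qed
  qed simp
  have bd: "bernoulli_dist p"
    unfolding bernoulli_dist_def
  proof
    show "\<forall>a. 0 \<le> p a \<and> p a \<le> 1" using pm(2) by (simp add: p_def)
    have img: "{w. length w = 1} = (\<lambda>a. [a]) ` UNIV"
      by (auto simp: length_Suc_conv)
    have "(\<mu> has_sum 1) {w. length w = 1}" using pm(3)[of 1] by simp
    hence "(\<mu> has_sum 1) ((\<lambda>a. [a]) ` UNIV)" by (simp only: img)
    hence "((\<mu> \<circ> (\<lambda>a. [a])) has_sum 1) UNIV" by (subst (asm) has_sum_reindex) (auto simp: inj_on_def)
    thus "(p has_sum 1) UNIV" by (simp add: p_def[abs_def] o_def)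
  qed
  have "induced_by_bernoulli \<mu> p" using bd prod by (simp add: induced_by_bernoulli_def)
  with assms(2) show False by blast
qed

end
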